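(* Consider an RBM with observed variables $X\in\{-1,1\}^n$ and latent variables $Y\in\{-1,1\}^m$ as defined in the context, with parameters $d$ and $s$ as defined there. Fix an observed variable $u\in[n]$ and subsets $I,S\subseteq[n]$ such that $\{u\}$, $I$, $S$ are pairwise disjoint. Suppose that $I$ is a subset of the MRF neighborhood of $u$ and that $|I|\le d-1$. Then there exists a subset $I'\subseteq I$ with $|I'|\le 2^s$ such that \[\nu_{u,I'|S}\;\ge\;\frac{1}{(4d)^{2^s}}\left(\frac{1}{d}\right)^{2^s(2^s+1)}\nu_{u,I|S}.\]
   Context: A Restricted Boltzmann Machine (RBM) is a distribution over observed variables $X\in\{-1,1\}^n$ and latent variables $Y\in\{-1,1\}^m$ with $\mathbb{P}(X=x,Y=y)\propto\exp(x^TJy+h^Tx+g^Ty)$, where $J\in\mathbb{R}^{n\times m}$, $h\in\mathbb{R}^n$, $g\in\mathbb{R}^m$. Observed variable $i$ and latent variable $j$ are connected iff $J_{i,j}\neq0$; $d$ is the maximum over $j\in[m]$ of $|\{i: J_{i,j}\ne 0\}|$. The marginal of $X$ satisfies $\mathbb{P}(X=x)\propto\exp(f(x))$ with $f(x)=\sum_{j=1}^m\rho(J_j\cdot x+g_j)+h^Tx$, where $J_j$ is the $j$-th column of $J$ and $\rho(t)=\log(e^t+e^{-t})$. Write $f(x)=\sum_{T\subseteq[n]}\hat f(T)\chi_T(x)$ with $\chi_T(x)=\prod_{i\in T}x_i$ (the unique multilinear expansion). The MRF neighborhood of $u$ is the set of $i\in[n]\setminus\{u\}$ such that $\hat f(T)\ne0$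 for some $T$ with $u,i\in T$. Define $s$ as the maximum over $u\in[n]$ of the number of latent variables $j\in[m]$ such that $J_{i,j}\neq 0$ for some $i$ in the MRF neighborhood of $u$. For disjoint $\{u\},I,S$ and assignments, $\nu_{u,I|S}(x_u,x_I|x_S):=|\mathbb{P}(X_u=x_u,X_I=x_I|X_S=x_S)-\mathbb{P}(X_u=x_u|X_S=x_S)\mathbb{P}(X_I=x_I|X_S=x_S)|$, and $\nu_{u,I|S}:=\mathbb{E}_{R,G}\big[\mathbb{E}_{X_S}[\nu_{u,I|S}(R,G|X_S)]\big]$, where $R$ is uniform on $\{-1,1\}$, $G$ is uniform on $\{-1,1\}^{|I|}$, independent of each other and of $X$, and $X_S$ has the marginal law of the RBM. *)

theory Defs
  imports "HOL-Analysis.Analysis"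
begin

text \<open>Observed variables are indexed by {0..<n}, latent ones by {0..<m}.
  A configuration of k spins is an extensional function on {0..<k} with values in {-1,1}.\<close>

definition spins :: "nat set \<Rightarrow> (nat \<Rightarrow> real) set" where
  "spins A = A \<rightarrow>\<^sub>E {-1, 1}"

definition cube :: "nat \<Rightarrow> (nat \<Rightarrow> real) set" where
  "cube k = spins {0..<k}"

definition rbm_weight :: "nat \<Rightarrow> nat \<Rightarrow> (nat \<Rightarrow> nat \<Rightarrow> real) \<Rightarrow> (nat \<Rightarrow> real) \<Rightarrow> (nat \<Rightarrow> real)
    \<Rightarrow> (nat \<Rightarrow> real) \<Rightarrow> (nat \<Rightarrow> real) \<Rightarrow> real" where
  "rbm_weight n m J h g x y =
     exp ((\<Sum>i<n. \<Sum>j<m. x i * J i j * y j) + (\<Sum>i<n. h i * x i) + (\<Sum>j<m. g j * y j))"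

definition rbm_pX :: "nat \<Rightarrow> nat \<Rightarrow> (nat \<Rightarrow> nat \<Rightarrow> real) \<Rightarrow> (nat \<Rightarrow> real) \<Rightarrow> (nat \<Rightarrow> real)
    \<Rightarrow> (nat \<Rightarrow> real) \<Rightarrow> real" where
  "rbm_pX n m J h g x =
     (\<Sum>y\<in>cube m. rbm_weight n m J h g x y) /
     (\<Sum>x'\<in>cube n. \<Sum>y\<in>cube m. rbm_weight n m J h g x' y)"

definition rbm_prob :: "nat \<Rightarrow> nat \<Rightarrow> (nat \<Rightarrow> nat \<Rightarrow> real) \<Rightarrow> (nat \<Rightarrow> real) \<Rightarrow> (nat \<Rightarrow> real)
    \<Rightarrow> ((nat \<Rightarrow> real) \<Rightarrow> bool) \<Rightarrow> real" where
  "rbm_prob n m J h g E = (\<Sum>x\<in>{x\<in>cube n. E x}. rbm_pX n m J h g x)"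

definition agrees :: "nat set \<Rightarrow> (nat \<Rightarrow> real) \<Rightarrow> (nat \<Rightarrow> real) \<Rightarrow> bool" where
  "agrees A a x \<longleftrightarrow> (\<forall>i\<in>A. x i = a i)"

definition rbm_cond :: "nat \<Rightarrow> nat \<Rightarrow> (nat \<Rightarrow> nat \<Rightarrow> real) \<Rightarrow> (nat \<Rightarrow> real) \<Rightarrow> (nat \<Rightarrow> real)
    \<Rightarrow> ((nat \<Rightarrow> real) \<Rightarrow> bool) \<Rightarrow> nat set \<Rightarrow> (nat \<Rightarrow> real) \<Rightarrow> real" where
  "rbm_cond n m J h g E S xS =
     rbm_prob n m J h g (\<lambda>x. E x \<and> agrees S xS x) / rbm_prob n m J h g (agrees S xS)"

definition nu_pt :: "nat \<Rightarrow> nat \<Rightarrow> (nat \<Rightarrow> nat \<Rightarrow> real) \<Rightarrow> (nat \<Rightarrow> real) \<Rightarrow> (nat \<Rightarrow> real)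
    \<Rightarrow> nat \<Rightarrow> nat set \<Rightarrow> nat set \<Rightarrow> real \<Rightarrow> (nat \<Rightarrow> real) \<Rightarrow> (nat \<Rightarrow> real) \<Rightarrow> real" where
  "nu_pt n m J h g u I S r xI xS =
     \<bar>rbm_cond n m J h g (\<lambda>x. x u = r \<and> agrees I xI x) S xS
      - rbm_cond n m J h g (\<lambda>x. x u = r) S xS * rbm_cond n m J h g (agrees I xI) S xS\<bar>"

text \<open>nu_{u,I|S} = E_{R,G}[E_{X_S}[nu_{u,I|S}(R,G|X_S)]], R uniform on {-1,1},
  G uniform on {-1,1}^I, X_S with the RBM marginal law.\<close>
definition nu :: "nat \<Rightarrow> nat \<Rightarrow> (nat \<Rightarrow> nat \<Rightarrow> real) \<Rightarrow> (nat \<Rightarrow> real) \<Rightarrow> (nat \<Rightarrow> real)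
    \<Rightarrow> nat \<Rightarrow> nat set \<Rightarrow> nat set \<Rightarrow> real" where
  "nu n m J h g u I S =
     (\<Sum>r\<in>{-1, 1::real}. \<Sum>G\<in>spins I. (1/2) * (1 / 2 ^ card I) *
        (\<Sum>xS\<in>spins S. rbm_prob n m J h g (agrees S xS) * nu_pt n m J h g u I S r G xS))"

definition rho :: "real \<Rightarrow> real" where
  "rho t = ln (exp t + exp (- t))"

definition rbm_f :: "nat \<Rightarrow> nat \<Rightarrow> (nat \<Rightarrow> nat \<Rightarrow> real) \<Rightarrow> (nat \<Rightarrow> real) \<Rightarrow> (nat \<Rightarrow> real)
    \<Rightarrow> (nat \<Rightarrow> real) \<Rightarrow> real" where
  "rbm_f n m J h g x = (\<Sum>j<m. rho ((\<Sum>i<n. J i j * x i) + g j)) + (\<Sum>i<n. h i * x i)"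

definition chi :: "nat set \<Rightarrow> (nat \<Rightarrow> real) \<Rightarrow> real" where
  "chi T x = (\<Prod>i\<in>T. x i)"

text \<open>Coefficient of chi_T in the unique multilinear expansion of a function on {-1,1}^n.\<close>
definition fourier :: "nat \<Rightarrow> ((nat \<Rightarrow> real) \<Rightarrow> real) \<Rightarrow> nat set \<Rightarrow> real" where
  "fourier n F T = (\<Sum>x\<in>cube n. F x * chi T x) / 2 ^ n"

definition mrf_nbhd :: "nat \<Rightarrow> nat \<Rightarrow> (nat \<Rightarrow> nat \<Rightarrow> real) \<Rightarrow> (nat \<Rightarrow> real) \<Rightarrow> (nat \<Rightarrow> real)
    \<Rightarrow> nat \<Rightarrow> nat set" where
  "mrf_nbhd n m J h g u =
     {i\<in>{0..<n} - {u}. \<exists>T\<subseteq>{0..<n}. u \<in> T \<and> i \<in> T \<and> fourier n (rbm_f n m J h g) T \<noteq> 0}"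

definition rbm_d :: "nat \<Rightarrow> nat \<Rightarrow> (nat \<Rightarrow> nat \<Rightarrow> real) \<Rightarrow> nat" where
  "rbm_d n m J = Max (insert 0 ((\<lambda>j. card {i\<in>{0..<n}. J i j \<noteq> 0}) ` {0..<m}))"

definition rbm_s :: "nat \<Rightarrow> nat \<Rightarrow> (nat \<Rightarrow> nat \<Rightarrow> real) \<Rightarrow> (nat \<Rightarrow> real) \<Rightarrow> (nat \<Rightarrow> real) \<Rightarrow> nat" where
  "rbm_s n m J h g = Max (insert 0 ((\<lambda>u. card {j\<in>{0..<m}. \<exists>i\<in>mrf_nbhd n m J h g u. J i j \<noteq> 0}) ` {0..<n}))"

end

theory Submission
  imports Defs
begin


definition Phi :: "'y set \<Rightarrow> ('y \<Rightarrow> real) \<Rightarrow> (nat \<Rightarrow> 'y \<Rightarrow> real) \<Rightarrow> nat set \<Rightarrow> real" where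
  "Phi Y a q T = (\<Sum>y\<in>Y. a y * (\<Prod>i\<in>T. q i y))"

lemma Phi_step:
  assumes "finite Y" "y0 \<in> Y" "finite T" "j \<notin> T"
  shows "Phi Y a q (insert j T) = Phi (Y - {y0}) (\<lambda>y. a y * (q j y - q j y0)) q T + q j y0 * Phi Y a q T"
proof -
  have "Phi (Y - {y0}) (\<lambda>y. a y * (q j y - q j y0)) q T = (\<Sum>y\<in>Y. a y * (q j y - q j y0) * (\<Prod>i\<in>T. q i y))"
    unfolding Phi_def using assms by (intro sum.mono_neutral_left) auto
  also have "\<dots> = (\<Sum>y\<in>Y. a y * (\<Prod>i\<in>insert j T. q i y)) - q j y0 * (\<Sum>y\<in>Y. a y * (\<Prod>i\<in>T. q i y))"
    using assms by (simp add: sum_distrib_left sum_subtractf[symmetric] algebra_simps)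
  finally show ?thesis unfolding Phi_def by simp
qed

lemma Phi_bound:
  assumes "finite Y" "card Y \<le> k" "finite I" "\<And>i y. i \<in> I \<Longrightarrow> \<bar>q i y\<bar> \<le> 1"
    "\<And>T. T \<subseteq> I \<Longrightarrow> card T \<le> k \<Longrightarrow> \<bar>Phi Y a q T\<bar> \<le> B"
  shows "\<bar>Phi Y a q I\<bar> \<le> (2 * real (card I) + 1) ^ k * B"
  using assms
proof (induction k arbitrary: Y a I B)
  case 0
  then have "Y = {}" by auto
  moreover have "\<bar>Phi Y a q {}\<bar> \<le> B" using 0 by auto
  ultimately show ?case by (simp add: Phi_def)
next
  case (Suc k)
  have B0: "0 \<le> B" using Suc.prems(5)[of "{}"] by auto
  show ?case
  proof (cases "Y = {}")
    case True
    then show ?thesis using B0 by (simp add: Phi_def)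
  next
    case False
    then obtain y0 where y0: "y0 \<in> Y" by auto
    have main: "finite I0 \<Longrightarrow> I0 \<subseteq> I \<Longrightarrow> (\<forall>T\<subseteq>I0. card T \<le> Suc k \<longrightarrow> \<bar>Phi Y a q T\<bar> \<le> B) \<Longrightarrow>
       \<bar>Phi Y a q I0\<bar> \<le> (2 * real (card I0) + 1) ^ Suc k * B" for I0
    proof (induction I0 rule: finite_induct)
      case empty
      then show ?case by auto
    next
      case (insert j I0)
      define a' where "a' y = a y * (q j y - q j y0)" for y
      have st: "Phi Y a q (insert j T) = Phi (Y - {y0}) a' q T + q j y0 * Phi Y a q T"
        if "T \<subseteq> I0" for T
        unfolding a'_def using Phi_step[OF Suc.prems(1) y0, of T j a q] that insert finite_subset by blast
      have c1: "card (Y - {y0}) \<le> k" using Suc.prems(2) y0 Suc.prems(1) by auto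
      have h1: "\<bar>Phi (Y - {y0}) a' q T\<bar> \<le> 2 * B" if "T \<subseteq> I0" "card T \<le> k" for T
      proof -
        have fT: "finite T" using that insert finite_subset by blast
        have "j \<notin> T" using that insert by auto
        then have "card (insert j T) \<le> Suc k" using fT that by simp
        moreover have "insert j T \<subseteq> insert j I0" using that by auto
        ultimately have "\<bar>Phi Y a q (insert j T)\<bar> \<le> B" using insert.prems by blast
        moreover have "\<bar>Phi Y a q T\<bar> \<le> B" using insert.prems that by auto
        moreover have "\<bar>q j y0 * Phi Y a q T\<bar> \<le> \<bar>Phi Y a q T\<bar>"
          using Suc.prems(4)[of j y0] insert.prems by (simp add: abs_mult mult_left_le_one_le)
        ultimately show ?thesis using st[OF that(1)] by linarith
      qed
      have ih1: "\<bar>Phi (Y - {y0}) a' q I0\<bar> \<le> (2 * real (card I0) + 1) ^ k * (2 * B)"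
        using Suc.IH[of "Y - {y0}" I0 a' "2 * B"] Suc.prems(1,4) c1 insert h1 by blast
      have ih2: "\<bar>Phi Y a q I0\<bar> \<le> (2 * real (card I0) + 1) ^ Suc k * B"
        using insert by auto
      have "\<bar>q j y0 * Phi Y a q I0\<bar> \<le> \<bar>Phi Y a q I0\<bar>"
        using Suc.prems(4)[of j y0] insert.prems by (simp add: abs_mult mult_left_le_one_le)
      then have "\<bar>Phi Y a q (insert j I0)\<bar> \<le> (2 * real (card I0) + 1) ^ k * (2 * B) + (2 * real (card I0) + 1) ^ Suc k * B"
        using st[of I0] ih1 ih2 by auto
      also have "\<dots> = (2 * real (card I0) + 1) ^ k * (2 * real (card I0) + 3) * B"
        by (simp add: algebra_simps)
      also have "\<dots> \<le> (2 * real (card I0) + 3) ^ k * (2 * real (card I0) + 3) * B"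
        using B0 by (intro mult_right_mono power_mono) auto
      also have "\<dots> = (2 * real (card (insert j I0)) + 1) ^ Suc k * B"
        using insert by (simp add: algebra_simps)
      finally show ?case .
    qed
    show ?thesis using main Suc.prems by auto
  qed
qed



definition Lf :: "(nat \<Rightarrow> nat \<Rightarrow> real) \<Rightarrow> (nat \<Rightarrow> real) \<Rightarrow> nat \<Rightarrow> nat \<Rightarrow> (nat \<Rightarrow> real) \<Rightarrow> real" where
  "Lf J h m i y = (\<Sum>j<m. J i j * y j) + h i"
definition Nf :: "(nat \<Rightarrow> nat \<Rightarrow> real) \<Rightarrow> (nat \<Rightarrow> real) \<Rightarrow> nat \<Rightarrow> nat \<Rightarrow> (nat \<Rightarrow> real) \<Rightarrow> real" where
  "Nf J h m i y = exp (Lf J h m i y) + exp (- Lf J h m i y)"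
definition qf :: "(nat \<Rightarrow> nat \<Rightarrow> real) \<Rightarrow> (nat \<Rightarrow> real) \<Rightarrow> nat \<Rightarrow> nat \<Rightarrow> real \<Rightarrow> (nat \<Rightarrow> real) \<Rightarrow> real" where
  "qf J h m i s y = exp (s * Lf J h m i y) / Nf J h m i y"
definition Qw where
  "Qw n m J h g E = (\<Sum>x\<in>{x\<in>cube n. E x}. \<Sum>y\<in>cube m. rbm_weight n m J h g x y)"

lemma Nf_pos: "Nf J h m i y > 0" unfolding Nf_def by (simp add: add_pos_pos)

lemma weight_prod:
  "rbm_weight n m J h g x y = exp (\<Sum>j<m. g j * y j) * (\<Prod>i<n. exp (x i * Lf J h m i y))"
proof -
  have "(\<Sum>i<n. \<Sum>j<m. x i * J i j * y j) + (\<Sum>i<n. h i * x i) = (\<Sum>i<n. x i * Lf J h m i y)"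
    unfolding Lf_def by (simp add: sum.distrib[symmetric] sum_distrib_left algebra_simps)
  then show ?thesis unfolding rbm_weight_def
    by (simp add: exp_add exp_sum[symmetric] add.commute add.left_commute)
qed

lemma Qw_agrees:
  assumes "D \<subseteq> {..<n}" "\<forall>i\<in>D. v i \<in> {-1, 1}"
  shows "Qw n m J h g (agrees D v) = (\<Sum>y\<in>cube m. exp (\<Sum>j<m. g j * y j) *
     (\<Prod>i<n. (if i \<in> D then exp (v i * Lf J h m i y) else Nf J h m i y)))"
proof -
  define C where "C i = (if i \<in> D then {v i} else {-1, 1::real})" for i
  have set: "{x\<in>cube n. agrees D v x} = PiE {..<n} C"
    using assms unfolding cube_def spins_def C_def agrees_def PiE_def Pi_def
    by (auto simp: atLeast0LessThan) metis
  have fin: "finite (cube m)" unfolding cube_def spins_def by (simp add: finite_PiE)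
  have "Qw n m J h g (agrees D v) = (\<Sum>y\<in>cube m. \<Sum>x\<in>PiE {..<n} C. rbm_weight n m J h g x y)"
    unfolding Qw_def set by (rule sum.swap)
  also have "\<dots> = (\<Sum>y\<in>cube m. exp (\<Sum>j<m. g j * y j) * (\<Sum>x\<in>PiE {..<n} C. \<Prod>i<n. exp (x i * Lf J h m i y)))"
    by (simp add: weight_prod sum_distrib_left)
  also have "\<dots> = (\<Sum>y\<in>cube m. exp (\<Sum>j<m. g j * y j) * (\<Prod>i<n. \<Sum>s\<in>C i. exp (s * Lf J h m i y)))"
    by (subst prod_sum_PiE) (auto simp: C_def)
  also have "\<dots> = (\<Sum>y\<in>cube m. exp (\<Sum>j<m. g j * y j) *
     (\<Prod>i<n. (if i \<in> D then exp (v i * Lf J h m i y) else Nf J h m i y)))"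
    by (intro sum.cong refl arg_cong2[where f="(*)"] prod.cong) (auto simp: C_def Nf_def)
  finally show ?thesis .
qed

definition Bf where
  "Bf n m J h g I D0 w y = exp (\<Sum>j<m. g j * y j) *
     (\<Prod>i\<in>{..<n} - I. (if i \<in> D0 then exp (w i * Lf J h m i y) else Nf J h m i y))"

lemma Qw_split:
  assumes "D0 \<inter> I = {}" "T \<subseteq> I" "I \<subseteq> {..<n}" "D0 \<subseteq> {..<n}"
    "\<forall>i\<in>D0 \<union> T. v i \<in> {-1, 1}" "\<forall>i\<in>D0. v i = w i"
  shows "Qw n m J h g (agrees (D0 \<union> T) v) = (\<Sum>y\<in>cube m. Bf n m J h g I D0 w y *
     (\<Prod>i\<in>I. Nf J h m i y) * (\<Prod>i\<in>T. qf J h m i (v i) y))"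
proof -
  have fI: "finite I" using assms(3) finite_subset by blast
  have "Qw n m J h g (agrees (D0 \<union> T) v) = (\<Sum>y\<in>cube m. exp (\<Sum>j<m. g j * y j) *
     (\<Prod>i<n. (if i \<in> D0 \<union> T then exp (v i * Lf J h m i y) else Nf J h m i y)))"
    using assms by (intro Qw_agrees) auto
  also have "\<dots> = (\<Sum>y\<in>cube m. Bf n m J h g I D0 w y *
     (\<Prod>i\<in>I. Nf J h m i y) * (\<Prod>i\<in>T. qf J h m i (v i) y))"
  proof (intro sum.cong refl)
    fix y
    let ?F = "\<lambda>i. (if i \<in> D0 \<union> T then exp (v i * Lf J h m i y) else Nf J h m i y)"
    have "(\<Prod>i<n. ?F i) = (\<Prod>i\<in>{..<n} - I. ?F i) * (\<Prod>i\<in>I. ?F i)"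
      using assms(3) by (simp add: prod.subset_diff)
    also have "(\<Prod>i\<in>{..<n} - I. ?F i) = (\<Prod>i\<in>{..<n} - I. (if i \<in> D0 then exp (w i * Lf J h m i y) else Nf J h m i y))"
      using assms(2,6) by (intro prod.cong) auto
    also have "(\<Prod>i\<in>I. ?F i) = (\<Prod>i\<in>I. Nf J h m i y * (if i \<in> T then qf J h m i (v i) y else 1))"
      using assms(1,2) Nf_pos[of J h m _ y] unfolding qf_def
      by (intro prod.cong) (auto simp: less_imp_neq[symmetric])
    also have "\<dots> = (\<Prod>i\<in>I. Nf J h m i y) * (\<Prod>i\<in>T. qf J h m i (v i) y)"
      using fI assms(2) by (simp add: prod.distrib prod.inter_restrict[symmetric] Int_absorb1)
    finally show "exp (\<Sum>j<m. g j * y j) * (\<Prod>i<n. ?F i) = Bf n m J h g I D0 w y *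
     (\<Prod>i\<in>I. Nf J h m i y) * (\<Prod>i\<in>T. qf J h m i (v i) y)"
      unfolding Bf_def by (simp add: mult.assoc)
  qed
  finally show ?thesis .
qed



lemma Lf_restrict:
  assumes "i \<in> I"
  shows "Lf J h m i (restrict y {j\<in>{0..<m}. \<exists>i\<in>I. J i j \<noteq> 0}) = Lf J h m i y"
  unfolding Lf_def using assms by (intro arg_cong2[where f="(+)"] sum.cong refl) auto

lemma rbm_prob_Qw:
  "rbm_prob n m J h g E = Qw n m J h g E / Qw n m J h g (\<lambda>_. True)"
  unfolding rbm_prob_def rbm_pX_def Qw_def by (simp add: sum_divide_distrib)

lemma Qw_pos:
  assumes "D \<subseteq> {..<n}" "\<forall>i\<in>D. v i \<in> {-1, 1}"
  shows "Qw n m J h g (agrees D v) > 0"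
proof -
  have ne: "cube m \<noteq> {}" unfolding cube_def spins_def by (simp add: PiE_eq_empty_iff)
  have fin: "finite (cube m)" unfolding cube_def spins_def by (simp add: finite_PiE)
  show ?thesis
    using assms by (subst Qw_agrees) (auto intro!: sum_pos prod_pos mult_pos_pos ne fin Nf_pos)
qed

lemma Qw_true: "Qw n m J h g (\<lambda>_. True) = Qw n m J h g (agrees {} v)"
  unfolding agrees_def by simp

lemma aux_ratio:
  fixes Z Q a b c :: real
  assumes "Z > 0" "Q > 0"
  shows "\<bar>a / Z / (Q / Z) - b / Z / (Q / Z) * (c / Z / (Q / Z))\<bar> = \<bar>a * Q - b * c\<bar> / Q^2"
proof -
  have "a / Z / (Q / Z) - b / Z / (Q / Z) * (c / Z / (Q / Z)) = (a * Q - b * c) / Q^2"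
    using assms by (simp add: field_simps power2_eq_square)
  then show ?thesis using assms by simp
qed

lemma nu_pt_Phi:
  assumes "u < n" "I \<subseteq> {0..<n}" "S \<subseteq> {0..<n}" "u \<notin> I" "u \<notin> S" "I \<inter> S = {}"
    and r: "r \<in> {-1, 1}" and xS: "xS \<in> spins S"
  shows "\<exists>a Q. Q > 0 \<and> (\<forall>T\<subseteq>I. \<forall>G\<in>spins I.
     nu_pt n m J h g u T S r G xS =
       \<bar>Phi ((\<lambda>y. restrict y {j\<in>{0..<m}. \<exists>i\<in>I. J i j \<noteq> 0}) ` cube m) a (\<lambda>i z. qf J h m i (G i) z) T\<bar> / Q)"
proof -
  define A where "A = {j\<in>{0..<m}. \<exists>i\<in>I. J i j \<noteq> 0}"
  define Y where "Y = (\<lambda>y. restrict y A) ` cube m"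
  define w where "w i = (if i = u then r else xS i)" for i
  define D1 where "D1 = insert u S"
  define B1 where "B1 y = Bf n m J h g I D1 w y" for y
  define B2 where "B2 y = Bf n m J h g I S w y" for y
  define NI where "NI y = (\<Prod>i\<in>I. Nf J h m i y)" for y
  define Q2 where "Q2 = (\<Sum>y\<in>cube m. B2 y * NI y)"
  define Q3 where "Q3 = (\<Sum>y\<in>cube m. B1 y * NI y)"
  define a0 where "a0 y = (B1 y * Q2 - Q3 * B2 y) * NI y" for y
  define a where "a z = (\<Sum>y\<in>{y\<in>cube m. restrict y A = z}. a0 y)" for z
  have fin: "finite (cube m)" unfolding cube_def spins_def by (simp add: finite_PiE)
  have xSv: "\<forall>i\<in>S. xS i \<in> {-1, 1}" using xS unfolding spins_def by auto
  have S0: "S \<subseteq> {..<n}" "I \<subseteq> {..<n}" using assms by auto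
  have Zpos: "Qw n m J h g (\<lambda>_. True) > 0" unfolding Qw_true[of _ _ _ _ _ w] by (rule Qw_pos) auto
  have Q2eq: "Qw n m J h g (agrees (S \<union> {}) w) = Q2"
    proof -
      have SI: "S \<inter> I = {}" using assms(6) by blast
      have "Qw n m J h g (agrees (S \<union> {}) w) = (\<Sum>y\<in>cube m. Bf n m J h g I S w y *
         (\<Prod>i\<in>I. Nf J h m i y) * (\<Prod>i\<in>{}. qf J h m i (w i) y))"
        by (rule Qw_split[OF SI]) (use S0 xSv assms in \<open>auto simp: w_def\<close>)
      then show ?thesis unfolding Q2_def B2_def NI_def by simp
    qed
  have Q2pos: "Q2 > 0"
  proof -
    have "Qw n m J h g (agrees (S \<union> {}) w) > 0"
      using S0 xSv assms by (intro Qw_pos) (auto simp: w_def)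
    then show ?thesis using Q2eq by simp
  qed
  have main: "nu_pt n m J h g u T S r G xS = \<bar>Phi Y a (\<lambda>i z. qf J h m i (G i) z) T\<bar> / Q2^2"
    if T: "T \<subseteq> I" and G: "G \<in> spins I" for T G
  proof -
    define v where "v i = (if i = u then r else if i \<in> S then xS i else G i)" for i
    have Gv: "\<forall>i\<in>I. G i \<in> {-1, 1}" using G unfolding spins_def by auto
    have vv: "\<forall>i\<in>D1 \<union> T. v i \<in> {-1, 1}" "\<forall>i\<in>S \<union> T. v i \<in> {-1, 1}"
      using r xSv Gv T unfolding v_def D1_def by auto
    have vw1: "\<forall>i\<in>D1. v i = w i" and vw2: "\<forall>i\<in>S. v i = w i"
      unfolding v_def w_def D1_def using assms by auto
    have wv: "\<forall>i\<in>D1. w i \<in> {-1, 1}" using r xSv unfolding w_def D1_def by auto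
    have D1I: "D1 \<inter> I = {}" "D1 \<subseteq> {..<n}" unfolding D1_def using assms by auto
    have TS: "\<And>i. i \<in> T \<Longrightarrow> i \<notin> S \<and> i \<noteq> u" using T assms by blast
    have e1: "(\<lambda>x. (x u = r \<and> agrees T G x) \<and> agrees S xS x) = agrees (D1 \<union> T) v"
      using T assms unfolding agrees_def v_def D1_def by (auto intro!: ext dest: TS)
    have e2: "(\<lambda>x. x u = r \<and> agrees S xS x) = agrees (D1 \<union> {}) v"
      using T assms unfolding agrees_def v_def D1_def by (auto intro!: ext dest: TS)
    have e3: "agrees S xS = agrees (S \<union> {}) v"
      using T assms unfolding agrees_def v_def by (auto intro!: ext dest: TS)
    have e4: "(\<lambda>x. agrees T G x \<and> agrees S xS x) = agrees (S \<union> T) v"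
      using T assms unfolding agrees_def v_def by (auto intro!: ext dest: TS)
    have qv: "(\<Prod>i\<in>T. qf J h m i (v i) y) = (\<Prod>i\<in>T. qf J h m i (G i) y)" for y
      using T assms unfolding v_def by (intro prod.cong) auto
    have Q1: "Qw n m J h g (agrees (D1 \<union> T) v) = (\<Sum>y\<in>cube m. B1 y * NI y * (\<Prod>i\<in>T. qf J h m i (G i) y))"
      unfolding B1_def NI_def qv[symmetric] using D1I T S0 vv vw1 by (intro Qw_split) auto
    have Q3: "Qw n m J h g (agrees (D1 \<union> {}) v) = Q3"
      unfolding Q3_def B1_def NI_def using D1I T S0 vv vw1 wv by (subst Qw_split[where w=w]) auto
    have Q2': "Qw n m J h g (agrees (S \<union> {}) v) = Q2"
      proof -
      have "agrees (S \<union> {}) v = agrees (S \<union> {}) w" using vw2 unfolding agrees_def by auto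
      then show ?thesis using Q2eq by simp
    qed
    have Q4: "Qw n m J h g (agrees (S \<union> T) v) = (\<Sum>y\<in>cube m. B2 y * NI y * (\<Prod>i\<in>T. qf J h m i (G i) y))"
      unfolding B2_def NI_def qv[symmetric] using assms T S0 vv vw2 by (intro Qw_split) auto
    define Z where "Z = Qw n m J h g (\<lambda>_. True)"
    have c1: "rbm_cond n m J h g (\<lambda>x. x u = r \<and> agrees T G x) S xS = (Qw n m J h g (agrees (D1 \<union> T) v) / Z) / (Q2 / Z)"
      unfolding rbm_cond_def rbm_prob_Qw Z_def[symmetric] unfolding e1 unfolding e3 Q2' by (rule refl)
    have c2: "rbm_cond n m J h g (\<lambda>x. x u = r) S xS = (Qw n m J h g (agrees (D1 \<union> {}) v) / Z) / (Q2 / Z)"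
      unfolding rbm_cond_def rbm_prob_Qw Z_def[symmetric] unfolding e2 unfolding e3 Q2' by (rule refl)
    have c3: "rbm_cond n m J h g (agrees T G) S xS = (Qw n m J h g (agrees (S \<union> T) v) / Z) / (Q2 / Z)"
      unfolding rbm_cond_def rbm_prob_Qw Z_def[symmetric] unfolding e4 unfolding e3 Q2' by (rule refl)
    have "nu_pt n m J h g u T S r G xS =
      \<bar>(Qw n m J h g (agrees (D1 \<union> T) v) / Z) / (Q2 / Z) -
       ((Qw n m J h g (agrees (D1 \<union> {}) v) / Z) / (Q2 / Z)) * ((Qw n m J h g (agrees (S \<union> T) v) / Z) / (Q2 / Z))\<bar>"
      unfolding nu_pt_def c1 c2 c3 by (rule refl)
    also have "\<dots> = \<bar>(\<Sum>y\<in>cube m. B1 y * NI y * (\<Prod>i\<in>T. qf J h m i (G i) y)) * Q2 -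
        Q3 * (\<Sum>y\<in>cube m. B2 y * NI y * (\<Prod>i\<in>T. qf J h m i (G i) y))\<bar> / Q2^2"
      unfolding Q1 Q3 Q4 using Zpos Q2pos unfolding Z_def by (rule aux_ratio)
    also have "(\<Sum>y\<in>cube m. B1 y * NI y * (\<Prod>i\<in>T. qf J h m i (G i) y)) * Q2 -
        Q3 * (\<Sum>y\<in>cube m. B2 y * NI y * (\<Prod>i\<in>T. qf J h m i (G i) y))
      = (\<Sum>y\<in>cube m. a0 y * (\<Prod>i\<in>T. qf J h m i (G i) y))"
      unfolding sum_distrib_right[where r=Q2] sum_distrib_left[where r=Q3] sum_subtractf[symmetric] a0_def
      by (intro sum.cong refl) (simp add: algebra_simps)
    also have "(\<Sum>y\<in>cube m. a0 y * (\<Prod>i\<in>T. qf J h m i (G i) y))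
       = (\<Sum>z\<in>Y. \<Sum>y\<in>{y\<in>cube m. restrict y A = z}. a0 y * (\<Prod>i\<in>T. qf J h m i (G i) y))"
      unfolding Y_def by (rule sum.group[symmetric]) (use fin in auto)
    also have "\<dots> = Phi Y a (\<lambda>i z. qf J h m i (G i) z) T"
      unfolding Phi_def a_def sum_distrib_right
    proof (intro sum.cong refl)
      fix z y assume "y \<in> {y\<in>cube m. restrict y A = z}"
      then have "z = restrict y A" by auto
      then have "qf J h m i (G i) z = qf J h m i (G i) y" if "i \<in> T" for i
        unfolding qf_def Nf_def A_def using Lf_restrict[of i I J h m y] that T by auto
      then show "a0 y * (\<Prod>i\<in>T. qf J h m i (G i) y) = a0 y * (\<Prod>i\<in>T. qf J h m i (G i) z)"
        by (metis (no_types, lifting) prod.cong)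
    qed
    finally show ?thesis .
  qed
  have "Q2^2 > 0" using Q2pos by simp
  moreover have "\<forall>T\<subseteq>I. \<forall>G\<in>spins I. nu_pt n m J h g u T S r G xS = \<bar>Phi Y a (\<lambda>i z. qf J h m i (G i) z) T\<bar> / Q2^2"
    using main by blast
  ultimately show ?thesis unfolding Y_def A_def by blast
qed



lemma sum_spins_ext:
  fixes F :: "(nat \<Rightarrow> real) \<Rightarrow> real"
  assumes "finite T" "finite D" "T \<inter> D = {}"
    and Fc: "\<And>G G'. (\<forall>i\<in>T. G i = G' i) \<Longrightarrow> F G = F G'"
  shows "(\<Sum>G\<in>spins (T \<union> D). F G) = 2 ^ card D * (\<Sum>G\<in>spins T. F G)"
  using assms(2,3)
proof (induction D rule: finite_induct)
  case empty
  then show ?case by simp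
next
  case (insert i D0)
  let ?P = "spins (T \<union> D0)"
  have iT: "i \<notin> T \<union> D0" using insert by auto
  have eq: "spins (T \<union> insert i D0) = (\<lambda>(y, g). g(i := y)) ` ({-1, 1} \<times> ?P)"
    unfolding spins_def using PiE_insert_eq[of i "T \<union> D0" "\<lambda>_. {-1, 1::real}"] by simp
  have inj: "inj_on (\<lambda>(y, g). g(i := y)) ({-1, 1::real} \<times> ?P)"
    unfolding inj_on_def
  proof (intro ballI impI)
    fix p p' assume p: "p \<in> {-1, 1::real} \<times> ?P" and p': "p' \<in> {-1, 1::real} \<times> ?P"
      and e0: "(\<lambda>(y, g). g(i := y)) p = (\<lambda>(y, g). g(i := y)) p'"
    obtain y g where pp: "p = (y, g)" by (cases p)
    obtain y' g' where pp': "p' = (y', g')" by (cases p')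
    have g: "g \<in> ?P" using p pp by simp
    have g': "g' \<in> ?P" using p' pp' by simp
    have e: "g(i := y) = g'(i := y')" using e0 unfolding pp pp' by simp
    have "y = y'" using fun_cong[OF e, of i] by simp
    moreover have "g = g'"
    proof (rule ext)
      fix j show "g j = g' j"
      proof (cases "j = i")
        case True
        have "g i = undefined" "g' i = undefined"
          using g g' iT unfolding spins_def by (auto intro: PiE_arb)
        then show ?thesis using True by simp
      next
        case False
        then show ?thesis using fun_cong[OF e, of j] by simp
      qed
    qed
    ultimately show "p = p'" unfolding pp pp' by simp
  qed
  have "(\<Sum>G\<in>spins (T \<union> insert i D0). F G) = (\<Sum>p\<in>{-1, 1::real} \<times> ?P. F ((\<lambda>(y, g). g(i := y)) p))"
    unfolding eq using inj by (simp add: sum.reindex)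
  also have "\<dots> = (\<Sum>y\<in>{-1, 1::real}. \<Sum>g\<in>?P. F (g(i := y)))"
    by (simp add: sum.cartesian_product split_def)
  also have "\<dots> = (\<Sum>y\<in>{-1, 1::real}. \<Sum>g\<in>?P. F g)"
  proof (intro sum.cong refl)
    fix y g show "F (g(i := y)) = F g" using iT by (intro Fc) auto
  qed
  also have "\<dots> = 2 * (\<Sum>g\<in>?P. F g)" by simp
  also have "\<dots> = 2 ^ card (insert i D0) * (\<Sum>G\<in>spins T. F G)"
    using insert by simp
  finally show ?case .
qed


lemma card_small_subsets:
  assumes "finite I" "K \<ge> 1"
  shows "card {T. T \<subseteq> I \<and> card T \<le> K} \<le> (card I + 1) ^ K"
proof -
  have sub: "{T. T \<subseteq> I \<and> card T \<le> K} \<subseteq> insert {} ((\<lambda>f. f ` {..<K}) ` ({..<K} \<rightarrow>\<^sub>E I))"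
  proof
    fix T assume T: "T \<in> {T. T \<subseteq> I \<and> card T \<le> K}"
    show "T \<in> insert {} ((\<lambda>f. f ` {..<K}) ` ({..<K} \<rightarrow>\<^sub>E I))"
    proof (cases "T = {}")
      case True then show ?thesis by simp
    next
      case False
      have TI: "T \<subseteq> I" using T by simp
      have fT: "finite T" using TI assms finite_subset by blast
      obtain e where e: "bij_betw e {0..<card T} T" using ex_bij_betw_nat_finite[OF fT] by blast
      have cT: "card T \<ge> 1" using False fT by (simp add: Suc_leI card_gt_0_iff)
      define f where "f = restrict (\<lambda>i. if i < card T then e i else e 0) {..<K}"
      have e0: "e 0 \<in> T" using e cT unfolding bij_betw_def by auto
      have fim: "f ` {..<K} = T"
      proof
        show "f ` {..<K} \<subseteq> T" unfolding f_def using e e0 unfolding bij_betw_def by auto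
        show "T \<subseteq> f ` {..<K}"
        proof
          fix t assume "t \<in> T"
          then have "t \<in> e ` {0..<card T}" using e unfolding bij_betw_def by simp
          then obtain i where i: "i < card T" "e i = t" by auto
          then have "i < K" using T by auto
          then show "t \<in> f ` {..<K}" unfolding f_def using i by (auto intro: image_eqI[of _ _ i])
        qed
      qed
      have eT: "e i \<in> I" if "i < card T" for i
        using that e TI unfolding bij_betw_def by auto
      have e0I: "e 0 \<in> I" using e0 TI by blast
      have "\<forall>i\<in>{..<K}. (if i < card T then e i else e 0) \<in> I" using eT e0I by simp
      then have fP: "f \<in> {..<K} \<rightarrow>\<^sub>E I" unfolding f_def restrict_PiE_iff by simp
      have "T \<in> (\<lambda>f. f ` {..<K}) ` ({..<K} \<rightarrow>\<^sub>E I)"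
        by (rule image_eqI[of _ _ f]) (use fP fim in auto)
      then show ?thesis by (rule insertI2)
    qed
  qed
  have fin1: "finite ((\<lambda>f. f ` {..<K}) ` ({..<K} \<rightarrow>\<^sub>E I))"
    using assms(1) by (simp add: finite_PiE)
  then have fin2: "finite (insert {} ((\<lambda>f. f ` {..<K}) ` ({..<K} \<rightarrow>\<^sub>E I)))" by simp
  have "card {T. T \<subseteq> I \<and> card T \<le> K} \<le> card (insert {} ((\<lambda>f. f ` {..<K}) ` ({..<K} \<rightarrow>\<^sub>E I)))"
    by (rule card_mono[OF fin2 sub])
  also have "\<dots> \<le> Suc (card ((\<lambda>f. f ` {..<K}) ` ({..<K} \<rightarrow>\<^sub>E I)))"
    using fin1 by (simp add: card_insert_if)
  also have "\<dots> \<le> Suc (card ({..<K} \<rightarrow>\<^sub>E I))"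
    using assms by (simp add: card_image_le finite_PiE)
  also have "\<dots> = Suc (card I ^ K)" by (simp add: card_PiE)
  also have "\<dots> \<le> (card I + 1) ^ K"
  proof -
    have "Suc (c ^ Suc k) \<le> (c + 1) ^ Suc k" for c k :: nat
    proof (induction k)
      case 0 then show ?case by simp
    next
      case (Suc k)
      have "Suc (c ^ Suc (Suc k)) \<le> (c + 1) * Suc (c ^ Suc k)" by simp
      also have "\<dots> \<le> (c + 1) * (c + 1) ^ Suc k" using Suc by (intro mult_left_mono) auto
      finally show ?case by simp
    qed
    moreover obtain k where "K = Suc k" using assms(2) by (cases K) auto
    ultimately show ?thesis by simp
  qed
  finally show ?thesis .
qed


lemma nu_pt_cong:
  assumes "\<forall>i\<in>T. G i = G' i"
  shows "nu_pt n m J h g u T S r G xS = nu_pt n m J h g u T S r G' xS"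
proof -
  have "agrees T G = agrees T G'" using assms unfolding agrees_def by auto
  then show ?thesis unfolding nu_pt_def by simp
qed

lemma reindex_gen:
  fixes X :: "(nat \<Rightarrow> real) \<Rightarrow> real"
  assumes "T \<subseteq> I" "finite I" and Xc: "\<And>G G'. \<forall>i\<in>T. G i = G' i \<Longrightarrow> X G = X G'"
  shows "(\<Sum>G\<in>spins T. 1 / 2 * (1 / 2 ^ card T) * X G) = (\<Sum>G\<in>spins I. 1 / 2 * (1 / 2 ^ card I) * X G)"
proof -
  have fT: "finite T" using assms finite_subset by blast
  have IT: "T \<union> (I - T) = I" using assms by auto
  have cI: "card I = card T + card (I - T)" using card_mono[OF assms(2,1)] card_Diff_subset[OF fT assms(1)] by simp
  have s0: "(\<Sum>G\<in>spins (T \<union> (I - T)). X G) = 2 ^ card (I - T) * (\<Sum>G\<in>spins T. X G)"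
  proof (rule sum_spins_ext)
    show "finite T" "finite (I - T)" "T \<inter> (I - T) = {}" using fT assms by auto
    fix G G' :: "nat \<Rightarrow> real" assume "\<forall>i\<in>T. G i = G' i"
    then show "X G = X G'" by (rule Xc)
  qed
  have s: "(\<Sum>G\<in>spins I. X G) = 2 ^ card (I - T) * (\<Sum>G\<in>spins T. X G)"
    using s0 unfolding IT .
  show ?thesis
    unfolding sum_distrib_left[symmetric] s cI by (simp add: power_add)
qed

lemma nu_reindex:
  assumes "T \<subseteq> I" "finite I"
  shows "nu n m J h g u T S = (\<Sum>r\<in>{-1, 1::real}. \<Sum>G\<in>spins I. (1/2) * (1 / 2 ^ card I) *
        (\<Sum>xS\<in>spins S. rbm_prob n m J h g (agrees S xS) * nu_pt n m J h g u T S r G xS))"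
  unfolding nu_def
  by (intro sum.cong[OF refl] reindex_gen[OF assms] sum.cong[OF refl] arg_cong2[where f="(*)"] refl nu_pt_cong)

lemma qf_le1:
  assumes "s \<in> {-1, 1}"
  shows "\<bar>qf J h m i s y\<bar> \<le> 1"
proof -
  have "exp (s * Lf J h m i y) \<le> Nf J h m i y" using assms unfolding Nf_def by auto
  then show ?thesis unfolding qf_def using Nf_pos[of J h m i y] by simp
qed



lemma coef_bound:
  fixes d :: real assumes "d \<ge> 1"
  shows "(1 / (4 * d)) ^ K * (1 / d) ^ (K * (K + 1)) * ((2 * d) ^ K * d ^ K) \<le> 1"
proof -
  have a: "(1 / (4 * d)) ^ K * (2 * d) ^ K = (1 / 2) ^ K"
    unfolding power_mult_distrib[symmetric] using assms by simp
  have b: "(1 / d) ^ (K * (K + 1)) * d ^ K = (1 / d) ^ (K * K)"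
  proof -
    have "(1 / d) ^ (K * (K + 1)) = (1 / d) ^ (K * K) * (1 / d) ^ K"
      by (simp add: power_add[symmetric] algebra_simps)
    moreover have "(1 / d) ^ K * d ^ K = 1"
      unfolding power_mult_distrib[symmetric] using assms by simp
    ultimately show ?thesis by (simp add: mult.assoc)
  qed
  have "(1 / (4 * d)) ^ K * (1 / d) ^ (K * (K + 1)) * ((2 * d) ^ K * d ^ K)
      = ((1 / (4 * d)) ^ K * (2 * d) ^ K) * ((1 / d) ^ (K * (K + 1)) * d ^ K)"
    by (simp add: algebra_simps)
  also have "\<dots> = (1 / 2) ^ K * (1 / d) ^ (K * K)" unfolding a b ..
  also have "\<dots> \<le> 1"
    using assms by (intro mult_le_one power_le_one) auto
  finally show ?thesis .
qed

lemma swap3: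
  "(\<Sum>r\<in>R. \<Sum>G\<in>GG. \<Sum>T\<in>TT. f T r G) = (\<Sum>T\<in>TT. \<Sum>r\<in>R. \<Sum>G\<in>GG. f T r G)"
proof -
  have "(\<Sum>r\<in>R. \<Sum>G\<in>GG. \<Sum>T\<in>TT. f T r G) = (\<Sum>r\<in>R. \<Sum>T\<in>TT. \<Sum>G\<in>GG. f T r G)"
    by (rule sum.cong[OF refl], rule sum.swap)
  also have "\<dots> = (\<Sum>T\<in>TT. \<Sum>r\<in>R. \<Sum>G\<in>GG. f T r G)" by (rule sum.swap)
  finally show ?thesis .
qed

lemma swap_aux:
  fixes c C :: real
  shows "c * (\<Sum>x\<in>X. w x * (C * (\<Sum>T\<in>TT. f T x))) = C * (\<Sum>T\<in>TT. c * (\<Sum>x\<in>X. w x * f T x))"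
proof -
  have "c * (\<Sum>x\<in>X. w x * (C * (\<Sum>T\<in>TT. f T x))) = (\<Sum>x\<in>X. \<Sum>T\<in>TT. C * (c * (w x * f T x)))"
    by (simp add: sum_distrib_left mult.assoc mult.left_commute)
  also have "\<dots> = (\<Sum>T\<in>TT. \<Sum>x\<in>X. C * (c * (w x * f T x)))" by (rule sum.swap)
  also have "\<dots> = C * (\<Sum>T\<in>TT. c * (\<Sum>x\<in>X. w x * f T x))"
    by (simp add: sum_distrib_left)
  finally show ?thesis .
qed

lemma rbm_prob_nonneg: "rbm_prob n m J h g E \<ge> 0"
  unfolding rbm_prob_def rbm_pX_def rbm_weight_def
  by (intro sum_nonneg divide_nonneg_nonneg) auto

lemma nu_nonneg: "nu n m J h g u T S \<ge> 0"
  unfolding nu_def nu_pt_def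
  by (intro sum_nonneg mult_nonneg_nonneg rbm_prob_nonneg) auto

theorem theorem2:
  fixes n m :: nat and J :: "nat \<Rightarrow> nat \<Rightarrow> real" and h g :: "nat \<Rightarrow> real"
    and u :: nat and I S :: "nat set"
  assumes "u < n" and "I \<subseteq> {0..<n}" and "S \<subseteq> {0..<n}"
    and "u \<notin> I" and "u \<notin> S" and "I \<inter> S = {}"
    and "I \<subseteq> mrf_nbhd n m J h g u"
    and "card I + 1 \<le> rbm_d n m J"
  shows "\<exists>I'\<subseteq>I. card I' \<le> 2 ^ rbm_s n m J h g \<and>
    nu n m J h g u I' S \<ge>
      (1 / (4 * real (rbm_d n m J)) ^ (2 ^ rbm_s n m J h g)) *
      (1 / real (rbm_d n m J)) ^ (2 ^ rbm_s n m J h g * (2 ^ rbm_s n m J h g + 1)) *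
      nu n m J h g u I S"
proof -
  define K where "K = (2::nat) ^ rbm_s n m J h g"
  define d where "d = rbm_d n m J"
  define TT where "TT = {T. T \<subseteq> I \<and> card T \<le> K}"
  define C where "C = (2 * real (card I) + 1) ^ K"
  define A where "A = {j\<in>{0..<m}. \<exists>i\<in>I. J i j \<noteq> 0}"
  define Y where "Y = (\<lambda>y. restrict y A) ` cube m"
  have fI: "finite I" using assms(2) finite_subset by blast
  have K1: "K \<ge> 1" unfolding K_def by simp
  have d1: "d \<ge> 1" using assms(8) unfolding d_def by simp
  have fTT: "finite TT" unfolding TT_def using fI by simp
  have finm: "finite (cube m)" unfolding cube_def spins_def by (simp add: finite_PiE)
  have cardY: "card Y \<le> K"
  proof -
    define Au where "Au = {j\<in>{0..<m}. \<exists>i\<in>mrf_nbhd n m J h g u. J i j \<noteq> 0}"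
    have AAu: "A \<subseteq> Au" unfolding A_def Au_def using assms(7) by auto
    have "card Au \<le> rbm_s n m J h g"
      unfolding rbm_s_def Au_def using assms(1) by (intro Max_ge) auto
    then have cA: "card A \<le> rbm_s n m J h g"
      using card_mono[OF _ AAu] unfolding Au_def by fastforce
    have Am: "A \<subseteq> {0..<m}" unfolding A_def by auto
    have "Y \<subseteq> spins A"
    proof
      fix z assume "z \<in> Y"
      then obtain y where y: "y \<in> cube m" "z = restrict y A" unfolding Y_def by auto
      have "\<forall>i\<in>A. y i \<in> {-1, 1}" using y(1) Am unfolding cube_def spins_def by (auto simp: PiE_iff)
      then show "z \<in> spins A" unfolding y(2) spins_def restrict_PiE_iff by simp
    qed
    then have "card Y \<le> card (spins A)"
      by (intro card_mono) (auto simp: spins_def A_def intro!: finite_PiE)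
    also have "\<dots> = 2 ^ card A"
      unfolding spins_def using finite_subset[OF Am] by (simp add: card_PiE numeral_2_eq_2)
    also have "\<dots> \<le> K" unfolding K_def using cA by (intro power_increasing) auto
    finally show ?thesis .
  qed
  have point: "nu_pt n m J h g u I S r G xS \<le> C * (\<Sum>T\<in>TT. nu_pt n m J h g u T S r G xS)"
    if r: "r \<in> {-1, 1}" and xS: "xS \<in> spins S" and G: "G \<in> spins I" for r xS G
  proof -
    obtain a Q where Q: "Q > 0" and eq: "\<forall>T\<subseteq>I. \<forall>G\<in>spins I.
       nu_pt n m J h g u T S r G xS = \<bar>Phi Y a (\<lambda>i z. qf J h m i (G i) z) T\<bar> / Q"
      using nu_pt_Phi[OF assms(1-6) r xS, of m J h g] unfolding Y_def A_def by blast
    let ?q = "\<lambda>i z. qf J h m i (G i) z"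
    have Gv: "\<And>i. i \<in> I \<Longrightarrow> G i \<in> {-1, 1}" using G unfolding spins_def by auto
    have "\<bar>Phi Y a ?q I\<bar> \<le> C * (\<Sum>T\<in>TT. \<bar>Phi Y a ?q T\<bar>)"
      unfolding C_def
    proof (rule Phi_bound)
      show "finite Y" unfolding Y_def using finm by simp
      show "card Y \<le> K" by (rule cardY)
      show "finite I" by (rule fI)
      show "\<bar>?q i y\<bar> \<le> 1" if "i \<in> I" for i y using qf_le1 Gv[OF that] by blast
      show "\<bar>Phi Y a ?q T\<bar> \<le> (\<Sum>T\<in>TT. \<bar>Phi Y a ?q T\<bar>)" if "T \<subseteq> I" "card T \<le> K" for T
        using that fTT by (intro member_le_sum) (auto simp: TT_def)
    qed
    then have "\<bar>Phi Y a ?q I\<bar> / Q \<le> C * (\<Sum>T\<in>TT. \<bar>Phi Y a ?q T\<bar>) / Q"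
      using Q by (simp add: divide_right_mono)
    also have "\<dots> = C * (\<Sum>T\<in>TT. \<bar>Phi Y a ?q T\<bar> / Q)"
      by (simp only: sum_divide_distrib[symmetric] times_divide_eq_right)
    also have "(\<Sum>T\<in>TT. \<bar>Phi Y a ?q T\<bar> / Q) = (\<Sum>T\<in>TT. nu_pt n m J h g u T S r G xS)"
      using eq G by (intro sum.cong refl) (auto simp: TT_def)
    finally show ?thesis using eq G by simp
  qed
  have C0: "C \<ge> 0" unfolding C_def by simp
  have nuI: "nu n m J h g u I S \<le> C * (\<Sum>T\<in>TT. nu n m J h g u T S)"
  proof -
    have "nu n m J h g u I S = (\<Sum>r\<in>{-1, 1::real}. \<Sum>G\<in>spins I. (1/2) * (1 / 2 ^ card I) *
        (\<Sum>xS\<in>spins S. rbm_prob n m J h g (agrees S xS) * nu_pt n m J h g u I S r G xS))"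
      unfolding nu_def ..
    also have "\<dots> \<le> (\<Sum>r\<in>{-1, 1::real}. \<Sum>G\<in>spins I. (1/2) * (1 / 2 ^ card I) *
        (\<Sum>xS\<in>spins S. rbm_prob n m J h g (agrees S xS) * (C * (\<Sum>T\<in>TT. nu_pt n m J h g u T S r G xS))))"
      by (intro sum_mono mult_left_mono point rbm_prob_nonneg) auto
    also have "\<dots> = (\<Sum>r\<in>{-1, 1::real}. \<Sum>G\<in>spins I. C * (\<Sum>T\<in>TT. (1/2) * (1 / 2 ^ card I) *
        (\<Sum>xS\<in>spins S. rbm_prob n m J h g (agrees S xS) * nu_pt n m J h g u T S r G xS)))"
      by (intro sum.cong refl swap_aux)
    also have "\<dots> = C * (\<Sum>r\<in>{-1, 1::real}. \<Sum>G\<in>spins I. \<Sum>T\<in>TT. (1/2) * (1 / 2 ^ card I) *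
        (\<Sum>xS\<in>spins S. rbm_prob n m J h g (agrees S xS) * nu_pt n m J h g u T S r G xS))"
      by (simp only: sum_distrib_left)
    also have "\<dots> = C * (\<Sum>T\<in>TT. \<Sum>r\<in>{-1, 1::real}. \<Sum>G\<in>spins I. (1/2) * (1 / 2 ^ card I) *
        (\<Sum>xS\<in>spins S. rbm_prob n m J h g (agrees S xS) * nu_pt n m J h g u T S r G xS))"
      by (subst swap3) (rule refl)
    also have "\<dots> = C * (\<Sum>T\<in>TT. nu n m J h g u T S)"
      using fI by (intro arg_cong2[where f="(*)"] refl sum.cong nu_reindex[symmetric]) (auto simp: TT_def)
    finally show ?thesis .
  qed
  have "{} \<in> TT" unfolding TT_def by simp
  then have neTT: "TT \<noteq> {}" by auto
  define M where "M = Max ((\<lambda>T. nu n m J h g u T S) ` TT)"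
  have "M \<in> (\<lambda>T. nu n m J h g u T S) ` TT" unfolding M_def using fTT neTT by (intro Max_in) auto
  then obtain Ts where Ts: "Ts \<in> TT" "nu n m J h g u Ts S = M" by auto
  have Mge: "nu n m J h g u T S \<le> M" if "T \<in> TT" for T
    unfolding M_def using fTT that by (intro Max_ge) auto
  have sumM: "(\<Sum>T\<in>TT. nu n m J h g u T S) \<le> real (card TT) * M"
    using Mge by (rule sum_bounded_above)
  have M0: "M \<ge> 0" using Ts nu_nonneg by metis
  have cTT: "real (card TT) \<le> real d ^ K"
  proof -
    have "card TT \<le> (card I + 1) ^ K" unfolding TT_def by (rule card_small_subsets[OF fI K1])
    also have "\<dots> \<le> d ^ K" using assms(8) unfolding d_def by (intro power_mono) auto
    finally show ?thesis by (metis of_nat_le_iff of_nat_power)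
  qed
  have Cle: "C \<le> (2 * real d) ^ K"
    unfolding C_def using assms(8) unfolding d_def by (intro power_mono) auto
  define coef where "coef = (1 / (4 * real d)) ^ K * (1 / real d) ^ (K * (K + 1))"
  have coef0: "coef \<ge> 0" unfolding coef_def by simp
  have "coef * nu n m J h g u I S \<le> coef * (C * (real (card TT) * M))"
    using nuI sumM C0 coef0 by (meson mult_left_mono order_trans)
  also have "\<dots> \<le> coef * ((2 * real d) ^ K * (real d ^ K * M))"
    using Cle cTT C0 M0 coef0 by (intro mult_left_mono mult_mono) auto
  also have "\<dots> = (coef * ((2 * real d) ^ K * real d ^ K)) * M" by (simp add: algebra_simps)
  also have "\<dots> \<le> 1 * M"
    using coef_bound[of "real d" K] d1 M0 unfolding coef_def by (intro mult_right_mono) auto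
  finally have fin: "coef * nu n m J h g u I S \<le> nu n m J h g u Ts S" using Ts by simp
  show ?thesis
  proof (intro exI[of _ Ts] conjI)
    show "Ts \<subseteq> I" "card Ts \<le> 2 ^ rbm_s n m J h g" using Ts unfolding TT_def K_def by auto
    show "(1 / (4 * real (rbm_d n m J)) ^ (2 ^ rbm_s n m J h g)) *
      (1 / real (rbm_d n m J)) ^ (2 ^ rbm_s n m J h g * (2 ^ rbm_s n m J h g + 1)) *
      nu n m J h g u I S \<le> nu n m J h g u Ts S"
      using fin unfolding coef_def K_def d_def by (simp add: power_one_over)
  qed
qed


end
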